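(* Let $\Lambda$ be a countable index set, $\mathbb{Y}$ a Banach space, and $(\overline{a}_j)_{j\in\Lambda}$, $(\overline{r}_j)_{j\in\Lambda}$ sequences of positive reals with $\overline{a}_j\overline{r}_j^{-1}\to 0$ (i.e. for every $\varepsilon>0$ all but finitely many $j$ satisfy $\overline{a}_j\overline{r}_j^{-1}\le\varepsilon$). For positive weights $\omega$ write $\|x\|_{\omega,p}=(\sum_{j}\omega_j^p|x_j|^p)^{1/p}$ and $\ell^p_\omega=\{x:\|x\|_{\omega,p}<\infty\}$. Suppose that $D\subseteq\ell^2_{\overline{a}}$ is closed with $D\cap\ell^1_{\overline{r}}\neq\emptyset$, and that $F\colon D\to\mathbb{Y}$ satisfies, for some $L>0$, $$\tfrac1L\|x^{(1)}-x^{(2)}\|_{\overline{a},2}\le\|F(x^{(1)})-F(x^{(2)})\|_{\mathbb{Y}}\le L\|x^{(1)}-x^{(2)}\|_{\overline{a},2}\quad\text{for all }x^{(1)},x^{(2)}\in D.$$ For $t\in(0,2)$ let $\|x\|_{k_t}=\sup_{\alpha>0}\alpha\big(\sum_{j\in\Lambda}\overline{a}_j^{-2}\overline{r}_j^2\mathbb{1}_{\{\overline{a}_j^{-2}\overline{r}_j\alpha<|x_j|\}}\big)^{1/t}$. Let $t\in(0,1)$, $\varrho>0$ and $x^+\in D$. If $\|x^+\|_{k_t}\le\varrho$, then the variational source condition $$\|x^+-x\|_{\overline{r},1}+\|x^+\|_{\overline{r},1}-\|x\|_{\overline{r},1}\le C_{\mathrm{vsc}}\|F(x^+)-F(x)\|_{\mathbb{Y}}^{\frac{2-2t}{2-t}}\quad\text{for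 all }x\in D\cap\ell^1_{\overline{r}}$$ holds with $C_{\mathrm{vsc}}=(2+4(2^{1-t}-1)^{-1})L^{\frac{2-2t}{2-t}}\varrho^{\frac{t}{2-t}}$. If in addition $D$ is closed under coordinate shrinkage (i.e. $x\in D$, $z\in\ell^2_{\overline{a}}$ with $|z_j|\le|x_j|$ for all $j$ implies $z\in D$), then this variational source condition implies $\|x^+\|_{k_t}\le L^{\frac{2-2t}{t}}C_{\mathrm{vsc}}^{\frac{2-t}{t}}$.
   Context: Setting: weighted $\ell^1$ Tikhonov regularization for a possibly nonlinear forward operator $F$ mapping sequences to a Banach space $\mathbb{Y}$, with two-sided Lipschitz bounds relative to the weighted $\ell^2$ norm $\|\cdot\|_{\overline{a},2}$. The quasi-norm $\|\cdot\|_{k_t}$ defines a weak (weighted Lorentz-type) sequence space $k_t$. *)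

theory Defs
  imports "HOL-Analysis.Analysis"
begin

text \<open>Sequences indexed by a countable type 'i (the index set Lambda is UNIV).\<close>

definition wl :: "('i \<Rightarrow> real) \<Rightarrow> real \<Rightarrow> ('i \<Rightarrow> real) \<Rightarrow> bool" where
  "wl w p x \<longleftrightarrow> (\<lambda>j. (w j * \<bar>x j\<bar>) powr p) summable_on UNIV"

text \<open>Weighted norm ||x||_{w,p}; meaningful for x with wl w p x.\<close>
definition wnorm :: "('i \<Rightarrow> real) \<Rightarrow> real \<Rightarrow> ('i \<Rightarrow> real) \<Rightarrow> real" where
  "wnorm w p x = (\<Sum>\<^sub>\<infinity>j. (w j * \<bar>x j\<bar>) powr p) powr (1 / p)"

definition epow :: "ennreal \<Rightarrow> real \<Rightarrow> ennreal" where
  "epow c e = (if c = \<infinity> then \<infinity> else ennreal (enn2real c powr e))"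

definition kt_norm :: "('i \<Rightarrow> real) \<Rightarrow> ('i \<Rightarrow> real) \<Rightarrow> real \<Rightarrow> ('i \<Rightarrow> real) \<Rightarrow> ennreal" where
  "kt_norm a r t x = (SUP \<alpha>\<in>{0<..}. ennreal \<alpha> *
      epow (\<Sum>\<^sub>\<infinity>j. ennreal ((a j) powr (-2) * (r j)\<^sup>2 *
               (if (a j) powr (-2) * r j * \<alpha> < \<bar>x j\<bar> then 1 else 0))) (1 / t))"

definition closed_wl2 :: "('i \<Rightarrow> real) \<Rightarrow> ('i \<Rightarrow> real) set \<Rightarrow> bool" where
  "closed_wl2 a D \<longleftrightarrow> (\<forall>X x. (\<forall>n. X n \<in> D) \<and> wl a 2 x \<and>
      (\<lambda>n. wnorm a 2 (\<lambda>j. X n j - x j)) \<longlonglongrightarrow> 0 \<longrightarrow> x \<in> D)"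

definition shrink_closed :: "('i \<Rightarrow> real) \<Rightarrow> ('i \<Rightarrow> real) set \<Rightarrow> bool" where
  "shrink_closed a D \<longleftrightarrow> (\<forall>x z. x \<in> D \<and> wl a 2 z \<and> (\<forall>j. \<bar>z j\<bar> \<le> \<bar>x j\<bar>) \<longrightarrow> z \<in> D)"

text \<open>The left-hand side
  contains ||x+||_{r,1}; it is finite (i.e. x+ in l^1_r) as part of the condition,
  since otherwise the left-hand side is +infinity.\<close>
definition vsc :: "('i \<Rightarrow> real) \<Rightarrow> (('i \<Rightarrow> real) \<Rightarrow> 'y::real_normed_vector) \<Rightarrow>
    ('i \<Rightarrow> real) set \<Rightarrow> ('i \<Rightarrow> real) \<Rightarrow> real \<Rightarrow> real \<Rightarrow> bool" where
  "vsc r F D xp C e \<longleftrightarrow> wl r 1 xp \<and>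
     (\<forall>x\<in>D. wl r 1 x \<longrightarrow>
        wnorm r 1 (\<lambda>j. xp j - x j) + wnorm r 1 xp - wnorm r 1 x \<le> C * norm (F xp - F x) powr e)"

end

theory Submission
  imports Defs
begin


lemma dyadic:
  fixes v \<alpha> :: real
  assumes v: "0 < v" "v \<le> \<alpha>" and N: "\<alpha>/2^(N+1) < v"
  shows "v \<le> (\<Sum>k\<le>N. if \<alpha>/2^(k+1) < v then \<alpha>/2^k else 0)"
proof -
  define m where "m = (LEAST k. \<alpha>/2^(k+1) < v)"
  have mN: "m \<le> N" unfolding m_def by (rule Least_le) (rule N)
  have m1: "\<alpha>/2^(m+1) < v" unfolding m_def by (rule LeastI) (rule N)
  have m2: "v \<le> \<alpha>/2^m"
  proof (cases m)
    case 0 then show ?thesis using v by simp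
  next
    case (Suc p)
    have "\<not> \<alpha>/2^(p+1) < v" using not_less_Least[of p "\<lambda>k. \<alpha>/2^(k+1) < v"] Suc m_def by simp
    then show ?thesis using Suc by simp
  qed
  have "v \<le> (if \<alpha>/2^(m+1) < v then \<alpha>/2^m else 0)" using m1 m2 by simp
  also have "\<dots> \<le> (\<Sum>k\<le>N. if \<alpha>/2^(k+1) < v then \<alpha>/2^k else 0)"
    by (rule member_le_sum[where f="\<lambda>k. if \<alpha>/2^(k+1) < v then \<alpha>/2^k else 0"]) (use mN v in auto)
  finally show ?thesis .
qed

lemma geo_bound:
  fixes q :: real assumes "0 \<le> q" "q < 1"
  shows "(\<Sum>k\<le>N. q^k) \<le> 1/(1-q)"
proof -
  have "(\<Sum>k\<le>N. q^k) = (\<Sum>k<Suc N. q^k)" by (simp add: lessThan_Suc_atMost)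
  also have "\<dots> = (1 - q^Suc N)/(1-q)" using assms by (rule_tac trans[OF sum_gp_strict]) simp
  also have "\<dots> \<le> 1/(1-q)" using assms by (intro divide_right_mono) auto
  finally show ?thesis .
qed

lemma term_id:
  fixes \<alpha> \<rho> t :: real assumes "\<alpha> > 0" "\<rho> > 0"
  shows "\<alpha>/2^k * (\<rho>/(\<alpha>/2^(k+1))) powr t = (2 powr t * \<rho> powr t * \<alpha> powr (1-t)) * (2 powr (t-1))^k"
proof -
  have e: "2 powr ((real k + 1) * t) = 2 powr t * 2 powr (real k * t)" by (simp add: distrib_right powr_add)
  have "\<alpha>/2^k * (\<rho>/(\<alpha>/2^(k+1))) powr t = \<alpha> * 2 powr (-real k) * (\<rho> powr t * 2 powr ((real k + 1) * t) * \<alpha> powr (-t))"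
    using assms e by (simp add: powr_divide powr_mult powr_minus_divide powr_realpow[symmetric] powr_powr divide_simps)
  also have "\<dots> = (2 powr t * \<rho> powr t * \<alpha> powr (1-t)) * (2 powr (t-1))^k"
    using assms by (simp add: powr_diff powr_add powr_realpow[symmetric] powr_powr algebra_simps powr_minus_divide divide_simps ring_distribs)
  finally show ?thesis .
qed

lemma tail_bound:
  fixes w y :: "'i \<Rightarrow> real" and \<rho> t \<alpha> :: real
  assumes w: "\<And>j. w j \<ge> 0" and y: "\<And>j. y j \<ge> 0"
  and weak: "\<And>s K. s > 0 \<Longrightarrow> finite K \<Longrightarrow> K \<subseteq> {j. s < y j} \<Longrightarrow> sum w K \<le> (\<rho>/s) powr t"
  and t: "0<t" "t<1" and rho: "\<rho>>0" and al: "\<alpha>>0"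
  and K: "finite K" "K \<subseteq> {j. y j \<le> \<alpha>}"
  shows "(\<Sum>j\<in>K. w j * y j) \<le> 2 * \<rho> powr t * \<alpha> powr (1-t) / (2 powr (1-t) - 1)"
proof -
  have g1: "2 powr (1-t) > 1" using t by simp
  define c where "c = 2 powr t * \<rho> powr t * \<alpha> powr (1-t)"
  define q where "q = 2 powr (t-1)"
  have "2 powr (t-1) < 2 powr 0" using t by (intro powr_less_mono) auto
  then have q: "0 \<le> q" "q < 1" unfolding q_def by auto
  have RHS: "c * (1/(1-q)) = 2 * \<rho> powr t * \<alpha> powr (1-t) / (2 powr (1-t) - 1)"
  proof -
    have E: "2 powr t * (1/(1 - 2 powr (t-1))) = 2 / (2 powr (1-t) - 1)"
      using g1 t by (simp add: powr_diff divide_simps powr_add[symmetric])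
    have "c * (1/(1-q)) = (\<rho> powr t * \<alpha> powr (1-t)) * (2 powr t * (1/(1 - 2 powr (t-1))))"
      unfolding c_def q_def by simp
    also have "\<dots> = (\<rho> powr t * \<alpha> powr (1-t)) * (2 / (2 powr (1-t) - 1))" by (simp only: E)
    finally show ?thesis by simp
  qed
  have c0: "c \<ge> 0" unfolding c_def by simp
  define K' where "K' = {j\<in>K. y j > 0}"
  have fK': "finite K'" using K by (simp add: K'_def)
  have eqK: "(\<Sum>j\<in>K. w j * y j) = (\<Sum>j\<in>K'. w j * y j)"
    unfolding K'_def using K(1) y
    by (intro sum.mono_neutral_cong_right) (auto simp: order.order_iff_strict)
  show ?thesis
  proof (cases "K' = {}")
    case True
    then show ?thesis using eqK RHS c0 q by (simp add: RHS[symmetric])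
  next
    case False
    define m where "m = Min (y ` K')"
    have m0: "m > 0" unfolding m_def using fK' False by (auto simp: K'_def)
    have mle: "\<And>j. j \<in> K' \<Longrightarrow> m \<le> y j" unfolding m_def using fK' by auto
    obtain N where N: "(1/2::real)^N < m/\<alpha>" using real_arch_pow_inv[of "m/\<alpha>" "1/2::real"] m0 al by auto
    have N': "\<alpha>/2^(N+1) < m"
    proof -
      have "\<alpha>/2^(N+1) \<le> \<alpha> * (1/2)^N" using al by (simp add: divide_simps power_one_over)
      also have "\<dots> < \<alpha> * (m/\<alpha>)" using N al by (intro mult_strict_left_mono) auto
      finally show ?thesis using al by simp
    qed
    have pw: "\<And>j. j \<in> K' \<Longrightarrow> y j \<le> (\<Sum>k\<le>N. if \<alpha>/2^(k+1) < y j then \<alpha>/2^k else 0)"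
      by (rule dyadic) (use K N' mle in \<open>auto simp: K'_def\<close>, fastforce)
    have "(\<Sum>j\<in>K'. w j * y j) \<le> (\<Sum>j\<in>K'. w j * (\<Sum>k\<le>N. if \<alpha>/2^(k+1) < y j then \<alpha>/2^k else 0))"
      by (intro sum_mono mult_left_mono pw w)
    also have "\<dots> = (\<Sum>k\<le>N. \<alpha>/2^k * sum w {j\<in>K'. \<alpha>/2^(k+1) < y j})"
      by (simp add: sum_distrib_left sum_distrib_right sum.swap[of _ K'] sum.inter_filter[OF fK'] if_distrib
            mult.commute cong: if_cong)
    also have "\<dots> \<le> (\<Sum>k\<le>N. \<alpha>/2^k * (\<rho>/(\<alpha>/2^(k+1))) powr t)"
      by (intro sum_mono mult_left_mono weak) (use al fK' in auto)
    also have "\<dots> = (\<Sum>k\<le>N. c * q^k)" unfolding c_def q_def using al rho by (intro sum.cong refl term_id)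
    also have "\<dots> = c * (\<Sum>k\<le>N. q^k)" by (simp add: sum_distrib_left)
    also have "\<dots> \<le> c * (1/(1-q))" by (intro mult_left_mono geo_bound q c0)
    finally show ?thesis using eqK RHS by simp
  qed
qed




lemma gen_cancel: "(s::real) \<noteq> 0 \<Longrightarrow> A*x + B*y = s*(A/s*x + B/s*y)"
  by (simp add: field_simps)

lemma alg_XY:
  fixes u \<rho> t :: real assumes u: "u > 0" and rho: "\<rho> > 0" and t: "t < 2"
  defines "\<alpha> \<equiv> u powr (2/(2-t)) * \<rho> powr (-t/(2-t))"
  shows "(\<rho>/\<alpha>) powr (t/2) * u = u powr ((2-2*t)/(2-t)) * \<rho> powr (t/(2-t))"
    and "\<rho> powr t * \<alpha> powr (1-t) = u powr ((2-2*t)/(2-t)) * \<rho> powr (t/(2-t))"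
proof -
  have s0: "2 - t \<noteq> 0" "2 - t > 0" using t by auto
  have a0: "\<alpha> > 0" unfolding \<alpha>_def using u rho by simp
  have la: "ln \<alpha> = (2/(2-t)) * ln u + (-t/(2-t)) * ln \<rho>" unfolding \<alpha>_def using u rho by (simp add: ln_mult ln_powr)
  have c1: "(2-t)*(2/(2-t)) = 2" "(2-t)*(-t/(2-t)) = -t" using t
    by (metis less_irrefl eq_iff_diff_eq_0 nonzero_mult_div_cancel_left times_divide_eq_right)+
  have "(2-t)*ln \<alpha> = ((2-t)*(2/(2-t)))*ln u + ((2-t)*(-t/(2-t)))*ln \<rho>" unfolding la by (simp only: algebra_simps)
  then have la2: "(2-t)*ln \<alpha> = 2*ln u - t*ln \<rho>" unfolding c1 by simp
  have "(2-t)*((t/2)*(ln \<rho> - ln \<alpha>) + ln u) = (t/2)*((2-t)*ln \<rho> - (2-t)*ln \<alpha>) + (2-t)*ln u"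
    by (simp add: field_simps)
  also have "\<dots> = (t/2)*((2-t)*ln \<rho> - (2*ln u - t*ln \<rho>)) + (2-t)*ln u" by (simp only: la2)
  also have "\<dots> = (2-2*t)*ln u + t*ln \<rho>" by (simp add: field_simps)
  also have "\<dots> = (2-t)*(((2-2*t)/(2-t))*ln u + (t/(2-t))*ln \<rho>)" using s0(1) by (rule gen_cancel)
  finally have X: "(t/2)*(ln \<rho> - ln \<alpha>) + ln u = ((2-2*t)/(2-t))*ln u + (t/(2-t))*ln \<rho>"
    using s0 by simp
  have "(2-t)*(t * ln \<rho> + (1-t) * ln \<alpha>) = (2-t)* t * ln \<rho> + (1-t) * ((2-t)*ln \<alpha>)"
    by (simp add: algebra_simps)
  also have "\<dots> = (2-t)* t * ln \<rho> + (1-t) * (2*ln u - t*ln \<rho>)" by (simp only: la2)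
  also have "\<dots> = (2-2*t)*ln u + t*ln \<rho>" by (simp add: field_simps)
  also have "\<dots> = (2-t)*(((2-2*t)/(2-t))*ln u + (t/(2-t))*ln \<rho>)" using s0(1) by (rule gen_cancel)
  finally have Y: "t * ln \<rho> + (1-t) * ln \<alpha> = ((2-2*t)/(2-t))*ln u + (t/(2-t))*ln \<rho>"
    using s0 by simp
  have "ln ((\<rho>/\<alpha>) powr (t/2) * u) = ln (u powr ((2-2*t)/(2-t)) * \<rho> powr (t/(2-t)))"
    using u rho a0 X by (simp add: ln_mult ln_powr ln_div)
  then show "(\<rho>/\<alpha>) powr (t/2) * u = u powr ((2-2*t)/(2-t)) * \<rho> powr (t/(2-t))"
    using u rho a0 by (subst (asm) ln_inj_iff) auto
  have "ln (\<rho> powr t * \<alpha> powr (1-t)) = ln (u powr ((2-2*t)/(2-t)) * \<rho> powr (t/(2-t)))"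
    using u rho a0 Y by (simp add: ln_mult ln_powr)
  then show "\<rho> powr t * \<alpha> powr (1-t) = u powr ((2-2*t)/(2-t)) * \<rho> powr (t/(2-t))"
    using u rho a0 by (subst (asm) ln_inj_iff) auto
qed

lemma alg_part2:
  fixes \<alpha> W C L t :: real assumes pos: "\<alpha> > 0" "W > 0" "C > 0" "L > 0" and t: "0 < t" "t < 1"
  and H: "2 * \<alpha> * W \<le> C * (L * \<alpha> * sqrt W) powr ((2-2*t)/(2-t))"
  shows "\<alpha> * W powr (1/t) \<le> L powr ((2-2*t)/t) * C powr ((2-t)/t)"
proof -
  define e where "e = (2-2*t)/(2-t)"
  have "ln (2 * \<alpha> * W) \<le> ln (C * (L * \<alpha> * sqrt W) powr e)"
    using H pos unfolding e_def by (subst ln_le_cancel_iff) auto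
  then have H1: "ln 2 + ln \<alpha> + ln W \<le> ln C + e * (ln L + ln \<alpha> + ln W / 2)"
    using pos by (simp add: ln_mult ln_powr ln_sqrt)
  have H2: "(2-t) * (ln 2 + ln \<alpha> + ln W) \<le> (2-t) * (ln C + e * (ln L + ln \<alpha> + ln W / 2))"
    using H1 t by (intro mult_left_mono) auto
  have l2: "ln (2::real) \<ge> 0" by simp
  have H3: "t * (ln \<alpha> + ln W / t) \<le> t * ((2-2*t)/t * ln L + (2-t)/t * ln C)"
  proof -
    have E3: "t * (ln \<alpha> + ln W / t) = t * ln \<alpha> + ln W" using t by (simp add: field_simps)
    have E4: "t * ((2-2*t)/t * ln L + (2-t)/t * ln C) = 2 * ln L - 2 * (t * ln L) + 2 * ln C - t * ln C" using t by (simp add: field_simps)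
    have Cq: "(2-t) * (ln C + e * (ln L + ln \<alpha> + ln W / 2)) = 2 * ln C - t * ln C + 2 * ln L - 2 * (t * ln L) + 2 * ln \<alpha> - 2 * (t * ln \<alpha>) + ln W - t * ln W"
      unfolding e_def using t by (simp add: field_simps)
    have E1: "(2-t) * (ln 2 + ln \<alpha> + ln W) = 2 * ln 2 - t * ln 2 + 2 * ln \<alpha> - t * ln \<alpha> + 2 * ln W - t * ln W"
      by (simp add: algebra_simps)
    have "t * ln 2 \<le> 1 * ln 2" using t l2 by (intro mult_right_mono) auto
    then have "t * ln \<alpha> + ln W \<le> 2 * ln L - 2 * (t * ln L) + 2 * ln C - t * ln C"
      using H2 E1 Cq l2 by linarith
    then show ?thesis using E3 E4 by simp
  qed
  then have "ln \<alpha> + ln W / t \<le> (2-2*t)/t * ln L + (2-t)/t * ln C" using t by simp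
  then have "ln (\<alpha> * W powr (1/t)) \<le> ln (L powr ((2-2*t)/t) * C powr ((2-t)/t))"
    using pos by (simp add: ln_mult ln_powr)
  then show ?thesis using pos by (subst (asm) ln_le_cancel_iff) auto
qed




lemma wl1: assumes "\<And>j. r j > 0" shows "wl r 1 x \<longleftrightarrow> (\<lambda>j. r j * \<bar>x j\<bar>) summable_on UNIV"
proof -
  have "\<And>j. \<bar>r j\<bar> = r j" using assms by (simp add: less_imp_le)
  then show ?thesis unfolding wl_def by (simp add: abs_mult)
qed

lemma wnorm1: assumes "\<And>j. r j > 0" shows "wnorm r 1 x = (\<Sum>\<^sub>\<infinity>j. r j * \<bar>x j\<bar>)"
proof -
  have "\<And>j. \<bar>r j\<bar> = r j" using assms by (simp add: less_imp_le)
  moreover have "(\<Sum>\<^sub>\<infinity>j. r j * \<bar>x j\<bar>) \<ge> 0" by (rule infsum_nonneg) (use assms in \<open>simp add: less_imp_le\<close>)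
  ultimately show ?thesis unfolding wnorm_def by (simp add: abs_mult)
qed

lemma pw2: "(a::real) > 0 \<Longrightarrow> (a * \<bar>x\<bar>) powr 2 = (a * x)^2"
  by (simp add: power_mult_distrib)

lemma wl2: assumes "\<And>j. a j > 0" shows "wl a 2 x \<longleftrightarrow> (\<lambda>j. (a j * x j)^2) summable_on UNIV"
  unfolding wl_def using pw2[OF assms] by simp

lemma wnorm2: assumes "\<And>j. a j > 0" shows "wnorm a 2 x = sqrt (\<Sum>\<^sub>\<infinity>j. (a j * x j)^2)"
  unfolding wnorm_def using pw2[OF assms] by (simp add: powr_half_sqrt infsum_nonneg)

lemma finite_by_card:
  assumes "finite Bad" and "\<And>K. finite K \<Longrightarrow> K \<subseteq> J - Bad \<Longrightarrow> real (card K) \<le> B"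
  shows "finite J"
proof -
  have "finite (J - Bad)"
  proof (rule ccontr)
    assume "infinite (J - Bad)"
    then obtain K where K: "finite K" "card K = nat \<lceil>B\<rceil> + 1" "K \<subseteq> J - Bad"
      using infinite_arbitrarily_large by blast
    then have "real (card K) \<le> B" using assms by blast
    with K(2) show False by linarith
  qed
  then show ?thesis using assms(1) by (metis finite_Diff2)
qed

lemma powm2: "(a::real) > 0 \<Longrightarrow> a powr (-2) = 1 / a^2"
  by (simp add: powr_minus divide_inverse)

lemma weak_from_kt:
  fixes a r x :: "'i \<Rightarrow> real"
  assumes kt: "kt_norm a r t x \<le> ennreal \<rho>" and t: "t > 0" and s: "s > 0" and rho: "\<rho> > 0"
    and K: "finite K" "K \<subseteq> {j. a j powr (-2) * r j * s < \<bar>x j\<bar>}"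
  shows "(\<Sum>j\<in>K. a j powr (-2) * (r j)^2) \<le> (\<rho>/s) powr t"
proof -
  define f where "f j = ennreal (a j powr (-2) * (r j)\<^sup>2 * (if a j powr (-2) * r j * s < \<bar>x j\<bar> then 1 else 0))" for j
  define S where "S = (\<Sum>\<^sub>\<infinity>j. f j)"
  have "ennreal s * epow S (1/t) \<le> kt_norm a r t x"
    unfolding kt_norm_def S_def f_def by (rule SUP_upper2[of s]) (use s in auto)
  with kt have le: "ennreal s * epow S (1/t) \<le> ennreal \<rho>" by simp
  have Sfin: "S \<noteq> \<infinity>"
  proof
    assume "S = \<infinity>"
    then have "ennreal s * epow S (1/t) = \<infinity>" using s by (simp add: epow_def ennreal_mult_eq_top_iff)
    with le show False by (simp add: top_unique)
  qed
  define R where "R = enn2real S"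
  have SR: "S = ennreal R" "R \<ge> 0" using Sfin unfolding R_def by (auto simp: less_top)
  have "ennreal (s * R powr (1/t)) \<le> ennreal \<rho>" using le SR Sfin s by (simp add: epow_def ennreal_mult)
  then have "s * R powr (1/t) \<le> \<rho>"
    using rho by (simp add: ennreal_le_iff)
  then have "R powr (1/t) \<le> \<rho>/s" using s by (simp add: field_simps)
  then have "(R powr (1/t)) powr t \<le> (\<rho>/s) powr t" using t by (intro powr_mono2) auto
  then have R: "R \<le> (\<rho>/s) powr t" using t SR by (simp add: powr_powr)
  have "sum f K = infsum f K" using K by simp
  also have "\<dots> \<le> S" unfolding S_def by (rule infsum_mono_neutral) (auto intro: nonneg_summable_on_complete)
  finally have "sum f K \<le> ennreal R" using SR by simp
  moreover have "sum f K = ennreal (\<Sum>j\<in>K. a j powr (-2) * (r j)^2)"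
  proof -
    have "sum f K = (\<Sum>j\<in>K. ennreal (a j powr (-2) * (r j)^2))"
      unfolding f_def using K by (intro sum.cong) auto
    also have "\<dots> = ennreal (\<Sum>j\<in>K. a j powr (-2) * (r j)^2)" by (rule sum_ennreal) simp
    finally show ?thesis .
  qed
  ultimately have "(\<Sum>j\<in>K. a j powr (-2) * (r j)^2) \<le> R"
    using SR by (simp add: ennreal_le_iff)
  with R show ?thesis by simp
qed




lemma infsum_diff_real:
  fixes f g :: "'a \<Rightarrow> real"
  assumes "f summable_on A" "g summable_on A"
  shows "infsum (\<lambda>x. f x - g x) A = infsum f A - infsum g A"
proof -
  have "infsum (\<lambda>x. f x + - g x) A = infsum f A + infsum (\<lambda>x. - g x) A"
    by (rule infsum_add) (use assms in \<open>simp_all add: summable_on_uminus\<close>)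
  then show ?thesis by (simp add: infsum_uminus)
qed

lemma summable_diff_real:
  fixes f g :: "'a \<Rightarrow> real"
  assumes "f summable_on A" "g summable_on A"
  shows "(\<lambda>x. f x - g x) summable_on A"
proof -
  have "(\<lambda>x. f x + - g x) summable_on A"
    by (rule summable_on_add) (use assms in \<open>simp_all add: summable_on_uminus\<close>)
  then show ?thesis by simp
qed

lemma setup_w:
  fixes a r :: real
  assumes a: "a > 0" and r: "r > 0"
  shows "a powr (-2) * r^2 = (a powr (-2) * r) * r"
    and "a powr (-2) * r^2 = (r / a)^2"
    and "a powr (-2) * r > 0"
    and "(a * (a powr (-2) * r))^2 = a powr (-2) * r^2"
    and "\<not> a / r > 1 \<Longrightarrow> a powr (-2) * r^2 \<ge> 1"
proof -
  show "a powr (-2) * r^2 = (a powr (-2) * r) * r" by (simp add: power2_eq_square)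
  show "a powr (-2) * r^2 = (r / a)^2" using a by (simp add: powm2 power_divide)
  show "a powr (-2) * r > 0" using a r by simp
  show "(a * (a powr (-2) * r))^2 = a powr (-2) * r^2" using a
    by (simp add: powm2 power_mult_distrib power_divide field_simps)
  assume "\<not> a / r > 1"
  then have "a \<le> r" using r by (simp add: divide_le_eq)
  then have "1 \<le> r / a" using a by simp
  then have "1 \<le> (r / a)^2" by (simp add: one_le_power)
  then show "a powr (-2) * r^2 \<ge> 1" using a by (simp add: powm2 power_divide)
qed




lemma part1:
  fixes a r :: "'i \<Rightarrow> real" and F :: "('i \<Rightarrow> real) \<Rightarrow> 'y::real_normed_vector"
  assumes a_pos: "\<And>j. a j > 0" and r_pos: "\<And>j. r j > 0"
    and ratio: "\<And>\<epsilon>. \<epsilon> > 0 \<Longrightarrow> finite {j. a j / r j > \<epsilon>}"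
    and D_sub: "\<And>x. x \<in> D \<Longrightarrow> wl a 2 x"
    and L_pos: "L > 0"
    and lipl: "\<And>x1 x2. x1 \<in> D \<Longrightarrow> x2 \<in> D \<Longrightarrow>
        (1 / L) * wnorm a 2 (\<lambda>j. x1 j - x2 j) \<le> norm (F x1 - F x2)"
    and t: "0 < t" "t < 1" and rho: "\<rho> > 0" and xp: "xp \<in> D"
    and kt: "kt_norm a r t xp \<le> ennreal \<rho>"
  shows "vsc r F D xp ((2 + 4 / (2 powr (1 - t) - 1)) * L powr ((2 - 2*t) / (2 - t)) * \<rho> powr (t / (2 - t)))
                ((2 - 2*t) / (2 - t))"
proof -
  define b where "b j = a j powr (-2) * r j" for j
  define w where "w j = a j powr (-2) * (r j)^2" for j
  define y where "y j = \<bar>xp j\<bar> / b j" for j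
  define Bad where "Bad = {j. a j / r j > 1}"
  define T where "T \<alpha> = 2 * \<rho> powr t * \<alpha> powr (1-t) / (2 powr (1-t) - 1)" for \<alpha>
  have fBad: "finite Bad" unfolding Bad_def using ratio[of 1] by simp
  have b0: "\<And>j. b j > 0" unfolding b_def using setup_w(3) a_pos r_pos by blast
  have wbr: "\<And>j. w j = b j * r j" unfolding b_def w_def using setup_w(1) a_pos r_pos by blast
  have w0: "\<And>j. w j > 0" using wbr b0 r_pos by simp
  have wge: "\<And>j. j \<notin> Bad \<Longrightarrow> w j \<ge> 1"
  proof -
    fix j assume "j \<notin> Bad"
    then show "w j \<ge> 1" unfolding w_def Bad_def using setup_w(5)[OF a_pos[of j] r_pos[of j]] by simp
  qed
  have wra: "\<And>j. w j = (r j / a j)^2" unfolding w_def using setup_w(2) a_pos r_pos by blast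
  have ry: "\<And>j. r j * \<bar>xp j\<bar> = w j * y j"
  proof -
    fix j have "b j > 0" by (rule b0)
    then show "r j * \<bar>xp j\<bar> = w j * y j" unfolding y_def wbr by (simp add: field_simps)
  qed
  have y0: "\<And>j. y j \<ge> 0" unfolding y_def using b0 by (simp add: less_imp_le)
  have weak: "\<And>s K. s > 0 \<Longrightarrow> finite K \<Longrightarrow> K \<subseteq> {j. s < y j} \<Longrightarrow> sum w K \<le> (\<rho>/s) powr t"
  proof -
    fix s K assume s: "s > 0" and K: "finite K" "K \<subseteq> {j. s < y j}"
    have "K \<subseteq> {j. a j powr (-2) * r j * s < \<bar>xp j\<bar>}"
      using K(2) b0 unfolding y_def b_def by (auto simp: pos_less_divide_eq mult.commute)
    from weak_from_kt[OF kt t(1) s rho K(1) this] show "sum w K \<le> (\<rho>/s) powr t" unfolding w_def .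
  qed
  have finJ: "\<And>s. s > 0 \<Longrightarrow> finite {j. s < y j}"
  proof -
    fix s :: real assume s: "s > 0"
    show "finite {j. s < y j}"
    proof (rule finite_by_card[OF fBad])
      fix K assume K: "finite K" "K \<subseteq> {j. s < y j} - Bad"
      have "real (card K) = (\<Sum>j\<in>K. 1)" by simp
      also have "\<dots> \<le> sum w K" using K wge by (intro sum_mono) auto
      also have "\<dots> \<le> (\<rho>/s) powr t" using weak[OF s K(1)] K by auto
      finally show "real (card K) \<le> (\<rho>/s) powr t" .
    qed
  qed
  have tail: "\<And>\<alpha> K. \<alpha> > 0 \<Longrightarrow> finite K \<Longrightarrow> K \<subseteq> {j. y j \<le> \<alpha>} \<Longrightarrow> (\<Sum>j\<in>K. r j * \<bar>xp j\<bar>) \<le> T \<alpha>"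
  proof -
    fix \<alpha> :: real and K assume al: "\<alpha> > 0" and K: "finite K" "K \<subseteq> {j. y j \<le> \<alpha>}"
    have "(\<Sum>j\<in>K. r j * \<bar>xp j\<bar>) = (\<Sum>j\<in>K. w j * y j)" using ry by simp
    also have "\<dots> \<le> T \<alpha>" unfolding T_def
      by (rule tail_bound[of w y \<rho> t]) (use w0 y0 weak t rho al K in \<open>auto simp: less_imp_le\<close>)
    finally show "(\<Sum>j\<in>K. r j * \<bar>xp j\<bar>) \<le> T \<alpha>" .
  qed
  have g1: "2 powr (1-t) > 1" using t by simp
  have T0: "\<And>\<alpha>. T \<alpha> \<ge> 0" unfolding T_def using g1 by (intro divide_nonneg_nonneg) auto
  have sp: "(\<lambda>j. r j * \<bar>xp j\<bar>) summable_on UNIV"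
  proof -
    define J1 where "J1 = {j. 1 < y j}"
    have fJ1: "finite J1" unfolding J1_def by (rule finJ) simp
    have s1: "(\<lambda>j. r j * \<bar>xp j\<bar>) summable_on J1" using fJ1 by simp
    have s2: "(\<lambda>j. r j * \<bar>xp j\<bar>) summable_on (- J1)"
    proof (rule nonneg_bdd_above_summable_on)
      show "\<And>x. x \<in> - J1 \<Longrightarrow> 0 \<le> r x * \<bar>xp x\<bar>" using r_pos by (simp add: less_imp_le)
      show "bdd_above (sum (\<lambda>j. r j * \<bar>xp j\<bar>) ` {F. F \<subseteq> - J1 \<and> finite F})"
      proof (rule bdd_aboveI2[where M="T 1"])
        fix F assume "F \<in> {F. F \<subseteq> - J1 \<and> finite F}"
        then have "finite F" "F \<subseteq> {j. y j \<le> 1}" by (auto simp: J1_def not_less)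
        then show "(\<Sum>j\<in>F. r j * \<bar>xp j\<bar>) \<le> T 1" by (intro tail) auto
      qed
    qed
    have "(\<lambda>j. r j * \<bar>xp j\<bar>) summable_on (J1 \<union> - J1)"
      by (rule summable_on_Un_disjoint[OF s1 s2]) auto
    then show ?thesis by simp
  qed
  show ?thesis
    unfolding vsc_def
  proof (intro conjI ballI impI)
    show "wl r 1 xp" using sp by (simp add: wl1[OF r_pos])
    fix x assume xD: "x \<in> D" and xl: "wl r 1 x"
    show "wnorm r 1 (\<lambda>j. xp j - x j) + wnorm r 1 xp - wnorm r 1 x
          \<le> (2 + 4 / (2 powr (1 - t) - 1)) * L powr ((2 - 2*t) / (2 - t)) * \<rho> powr (t / (2 - t))
             * norm (F xp - F x) powr ((2 - 2*t) / (2 - t))"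
    proof -
    define \<delta> where "\<delta> = norm (F xp - F x)"
    define e where "e = (2 - 2*t) / (2 - t)"
    define K0 where "K0 = 2 + 4 / (2 powr (1 - t) - 1)"
    have sx: "(\<lambda>j. r j * \<bar>x j\<bar>) summable_on UNIV" using xl by (simp add: wl1[OF r_pos])
    have sd: "(\<lambda>j. r j * \<bar>xp j - x j\<bar>) summable_on UNIV"
    proof (rule summable_on_comparison_test[OF summable_on_add[OF sp sx]])
      fix j
      have "\<bar>xp j - x j\<bar> \<le> \<bar>xp j\<bar> + \<bar>x j\<bar>" by simp
      then show "r j * \<bar>xp j - x j\<bar> \<le> r j * \<bar>xp j\<bar> + r j * \<bar>x j\<bar>"
        using r_pos[of j] by (simp add: ring_distribs(1)[symmetric] mult_left_mono)
      show "0 \<le> r j * \<bar>xp j - x j\<bar>" using r_pos[of j] by simp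
    qed
    define g where "g j = r j * \<bar>xp j - x j\<bar> + r j * \<bar>xp j\<bar> - r j * \<bar>x j\<bar>" for j
    have sg: "g summable_on UNIV" unfolding g_def
      by (intro summable_diff_real summable_on_add sd sp sx)
    have LHS: "wnorm r 1 (\<lambda>j. xp j - x j) + wnorm r 1 xp - wnorm r 1 x = infsum g UNIV"
      unfolding g_def wnorm1[OF r_pos]
      by (simp add: infsum_diff_real infsum_add summable_on_add sd sp sx)
    have g2d: "\<And>j. g j \<le> 2 * (r j * \<bar>xp j - x j\<bar>)"
    proof -
      fix j have "\<bar>xp j\<bar> - \<bar>x j\<bar> \<le> \<bar>xp j - x j\<bar>" by simp
      then have "r j * (\<bar>xp j\<bar> - \<bar>x j\<bar>) \<le> r j * \<bar>xp j - x j\<bar>" using r_pos[of j] by (intro mult_left_mono) auto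
      then show "g j \<le> 2 * (r j * \<bar>xp j - x j\<bar>)" unfolding g_def by (simp add: algebra_simps)
    qed
    have g2p: "\<And>j. g j \<le> 2 * (r j * \<bar>xp j\<bar>)"
    proof -
      fix j have "\<bar>xp j - x j\<bar> - \<bar>x j\<bar> \<le> \<bar>xp j\<bar>" by simp
      then have "r j * (\<bar>xp j - x j\<bar> - \<bar>x j\<bar>) \<le> r j * \<bar>xp j\<bar>" using r_pos[of j] by (intro mult_left_mono) auto
      then show "g j \<le> 2 * (r j * \<bar>xp j\<bar>)" unfolding g_def by (simp add: algebra_simps)
    qed
    have sxa: "(\<lambda>j. (a j * xp j)^2) summable_on UNIV" using D_sub[OF xp] by (simp add: wl2[OF a_pos])
    have sxb: "(\<lambda>j. (a j * x j)^2) summable_on UNIV" using D_sub[OF xD] by (simp add: wl2[OF a_pos])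
    have sa: "(\<lambda>j. (a j * (xp j - x j))^2) summable_on UNIV"
    proof (rule summable_on_comparison_test[OF summable_on_add[OF summable_on_cmult_right[OF sxa, of 2] summable_on_cmult_right[OF sxb, of 2]]])
      fix j
      have "(a j * (xp j - x j))^2 = (a j * xp j - a j * x j)^2" by (simp add: algebra_simps)
      also have "\<dots> \<le> 2 * (a j * xp j)^2 + 2 * (a j * x j)^2"
        using power2_diff[of "a j * xp j" "a j * x j"] power2_sum[of "a j * xp j" "a j * x j"]
          zero_le_power2[of "a j * xp j + a j * x j"] by linarith
      finally show "(a j * (xp j - x j))^2 \<le> 2 * (a j * xp j)^2 + 2 * (a j * x j)^2" .
    qed simp
    have wn: "wnorm a 2 (\<lambda>j. xp j - x j) \<le> L * \<delta>"
      using lipl[OF xp xD] L_pos unfolding \<delta>_def by (simp add: field_simps)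
    have wn2: "wnorm a 2 (\<lambda>j. xp j - x j) = sqrt (\<Sum>\<^sub>\<infinity>j. (a j * (xp j - x j))^2)"
      by (rule wnorm2[OF a_pos])
    have "wnorm r 1 (\<lambda>j. xp j - x j) + wnorm r 1 xp - wnorm r 1 x
          \<le> K0 * L powr e * \<rho> powr (t / (2 - t)) * \<delta> powr e"
    proof (cases "\<delta> = 0")
      case True
      then have "sqrt (\<Sum>\<^sub>\<infinity>j. (a j * (xp j - x j))^2) \<le> 0" using wn wn2 by simp
      then have "(\<Sum>\<^sub>\<infinity>j. (a j * (xp j - x j))^2) \<le> 0" by simp
      then have "\<And>j. (a j * (xp j - x j))^2 = 0"
        by (rule nonneg_infsum_le_0D[OF _ sa]) auto
      then have "\<And>j. x j = xp j" using a_pos by (simp add: less_imp_neq[symmetric])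
      then have "\<And>j. g j = 0" unfolding g_def by simp
      then have "g = (\<lambda>_. 0)" by auto
      then have "infsum g UNIV = 0" by simp
      then show ?thesis using LHS True by simp
    next
      case False
      then have d0: "\<delta> > 0" unfolding \<delta>_def by simp
      define \<alpha> where "\<alpha> = (L * \<delta>) powr (2/(2-t)) * \<rho> powr (-t/(2-t))"
      have al: "\<alpha> > 0" unfolding \<alpha>_def using L_pos d0 rho by simp
      define J where "J = {j. \<alpha> < y j}"
      have fJ: "finite J" unfolding J_def by (rule finJ[OF al])
      have "infsum g UNIV = infsum g (J \<union> - J)" by simp
      also have "\<dots> = infsum g J + infsum g (- J)"
        by (rule infsum_Un_disjoint) (auto intro: summable_on_subset_banach[OF sg])
      finally have split: "infsum g UNIV = sum g J + infsum g (- J)" using fJ by simp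
      have b1: "sum g J \<le> 2 * ((\<rho>/\<alpha>) powr (t/2) * (L * \<delta>))"
      proof -
        have "sum g J \<le> 2 * (\<Sum>j\<in>J. r j * \<bar>xp j - x j\<bar>)"
          unfolding sum_distrib_left by (rule sum_mono) (rule g2d)
        also have "(\<Sum>j\<in>J. r j * \<bar>xp j - x j\<bar>) = (\<Sum>j\<in>J. \<bar>r j / a j\<bar> * \<bar>a j * (xp j - x j)\<bar>)"
        proof (rule sum.cong[OF refl])
          fix j have "a j > 0" "r j > 0" using a_pos r_pos by auto
          then show "r j * \<bar>xp j - x j\<bar> = \<bar>r j / a j\<bar> * \<bar>a j * (xp j - x j)\<bar>" by (simp add: abs_mult)
        qed
        also have "\<dots> \<le> L2_set (\<lambda>j. r j / a j) J * L2_set (\<lambda>j. a j * (xp j - x j)) J"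
          by (rule L2_set_mult_ineq)
        also have "\<dots> \<le> (\<rho>/\<alpha>) powr (t/2) * (L * \<delta>)"
        proof (rule mult_mono)
          have "L2_set (\<lambda>j. r j / a j) J = sqrt (sum w J)" unfolding L2_set_def wra by simp
          also have "\<dots> \<le> sqrt ((\<rho>/\<alpha>) powr t)" using weak[OF al fJ] by (simp add: J_def)
          also have "\<dots> = (\<rho>/\<alpha>) powr (t/2)" using rho al by (simp add: powr_half_sqrt_powr)
          finally show "L2_set (\<lambda>j. r j / a j) J \<le> (\<rho>/\<alpha>) powr (t/2)" .
          have "L2_set (\<lambda>j. a j * (xp j - x j)) J \<le> sqrt (\<Sum>\<^sub>\<infinity>j. (a j * (xp j - x j))^2)"
            unfolding L2_set_def using fJ by (intro real_sqrt_le_mono finite_sum_le_infsum sa) auto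
          also have "\<dots> \<le> L * \<delta>" using wn wn2 by simp
          finally show "L2_set (\<lambda>j. a j * (xp j - x j)) J \<le> L * \<delta>" .
        qed (auto simp: L2_set_def intro: sum_nonneg)
        finally show ?thesis by simp
      qed
      have b2: "infsum g (- J) \<le> 2 * T \<alpha>"
      proof (rule infsum_le_finite_sums)
        show "g summable_on - J" by (rule summable_on_subset_banach[OF sg]) auto
        fix F assume F: "finite F" "F \<subseteq> - J"
        have "sum g F \<le> 2 * (\<Sum>j\<in>F. r j * \<bar>xp j\<bar>)"
          unfolding sum_distrib_left by (rule sum_mono) (rule g2p)
        also have "\<dots> \<le> 2 * T \<alpha>"
        proof -
          have "F \<subseteq> {j. y j \<le> \<alpha>}" using F(2) by (auto simp: J_def not_less)
          then show ?thesis using tail[OF al F(1)] by simp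
        qed
        finally show "sum g F \<le> 2 * T \<alpha>" .
      qed
      define Z where "Z = (L * \<delta>) powr e * \<rho> powr (t/(2-t))"
      have XZ: "(\<rho>/\<alpha>) powr (t/2) * (L * \<delta>) = Z" and YZ: "\<rho> powr t * \<alpha> powr (1-t) = Z"
        unfolding Z_def e_def \<alpha>_def using alg_XY[of "L * \<delta>" \<rho> t] L_pos d0 rho t by auto
      have TZ: "T \<alpha> = 2 * Z / (2 powr (1-t) - 1)" unfolding T_def YZ[symmetric] by simp
      have "wnorm r 1 (\<lambda>j. xp j - x j) + wnorm r 1 xp - wnorm r 1 x \<le> 2 * Z + 2 * (2 * Z / (2 powr (1-t) - 1))"
        using LHS split b1 b2 XZ TZ by simp
      also have "\<dots> = K0 * Z" unfolding K0_def by (simp add: field_simps)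
      also have "\<dots> = K0 * L powr e * \<rho> powr (t / (2 - t)) * \<delta> powr e"
        unfolding Z_def using L_pos d0 by (simp add: powr_mult)
      finally show ?thesis .
    qed
    then show ?thesis by (simp only: K0_def e_def \<delta>_def)
    qed
  qed
qed




lemma part2:
  fixes a r :: "'i \<Rightarrow> real" and F :: "('i \<Rightarrow> real) \<Rightarrow> 'y::real_normed_vector"
  assumes a_pos: "\<And>j. a j > 0" and r_pos: "\<And>j. r j > 0"
    and ratio: "\<And>\<epsilon>. \<epsilon> > 0 \<Longrightarrow> finite {j. a j / r j > \<epsilon>}"
    and D_sub: "\<And>x. x \<in> D \<Longrightarrow> wl a 2 x"
    and L_pos: "L > 0"
    and lipu: "\<And>x1 x2. x1 \<in> D \<Longrightarrow> x2 \<in> D \<Longrightarrow>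
        norm (F x1 - F x2) \<le> L * wnorm a 2 (\<lambda>j. x1 j - x2 j)"
    and t: "0 < t" "t < 1" and xp: "xp \<in> D" and C: "C > 0"
    and sc: "shrink_closed a D" and V: "vsc r F D xp C ((2 - 2*t) / (2 - t))"
  shows "kt_norm a r t xp \<le> ennreal (L powr ((2 - 2*t) / t) * C powr ((2 - t) / t))"
  unfolding kt_norm_def
proof (rule SUP_least)
  fix \<alpha> :: real assume "\<alpha> \<in> {0<..}"
  then have al: "\<alpha> > 0" by simp
  define e where "e = (2 - 2*t) / (2 - t)"
  define b where "b j = a j powr (-2) * r j" for j
  define w where "w j = a j powr (-2) * (r j)^2" for j
  define Bad where "Bad = {j. a j / r j > 1}"
  define J where "J = {j. a j powr (-2) * r j * \<alpha> < \<bar>xp j\<bar>}"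
  define W where "W = sum w J"
  define tg where "tg = L powr ((2 - 2*t) / t) * C powr ((2 - t) / t)"
  have tg0: "tg \<ge> 0" unfolding tg_def by simp
  have fBad: "finite Bad" unfolding Bad_def using ratio[of 1] by simp
  have b0: "\<And>j. b j > 0" unfolding b_def using setup_w(3) a_pos r_pos by blast
  have wbr: "\<And>j. w j = b j * r j" unfolding b_def w_def using setup_w(1) a_pos r_pos by blast
  have w0: "\<And>j. w j > 0" using wbr b0 r_pos by simp
  have wge: "\<And>j. j \<notin> Bad \<Longrightarrow> w j \<ge> 1"
  proof -
    fix j assume "j \<notin> Bad"
    then show "w j \<ge> 1" unfolding w_def Bad_def using setup_w(5)[OF a_pos[of j] r_pos[of j]] by simp
  qed
  have abw: "\<And>j. (a j * b j)^2 = w j" unfolding w_def b_def using setup_w(4) a_pos r_pos by blast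
  have xpl: "wl r 1 xp" and Vi: "\<And>x. x \<in> D \<Longrightarrow> wl r 1 x \<Longrightarrow>
        wnorm r 1 (\<lambda>j. xp j - x j) + wnorm r 1 xp - wnorm r 1 x \<le> C * norm (F xp - F x) powr e"
    using V unfolding vsc_def e_def by auto
  have sp: "(\<lambda>j. r j * \<bar>xp j\<bar>) summable_on UNIV" using xpl by (simp add: wl1[OF r_pos])
  define N where "N = (\<Sum>\<^sub>\<infinity>j. r j * \<bar>xp j\<bar>)"
  have Jb: "\<And>j. j \<in> J \<longleftrightarrow> b j * \<alpha> < \<bar>xp j\<bar>" unfolding J_def b_def by simp
  have fJ: "finite J"
  proof (rule finite_by_card[OF fBad])
    fix K assume K: "finite K" "K \<subseteq> J - Bad"
    have "\<alpha> * real (card K) = (\<Sum>j\<in>K. \<alpha> * 1)" by simp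
    also have "\<dots> \<le> (\<Sum>j\<in>K. \<alpha> * w j)" using K wge al by (intro sum_mono mult_left_mono) auto
    also have "\<dots> \<le> (\<Sum>j\<in>K. r j * \<bar>xp j\<bar>)"
    proof (rule sum_mono)
      fix j assume "j \<in> K"
      then have "b j * \<alpha> < \<bar>xp j\<bar>" using K Jb by auto
      then have "r j * (b j * \<alpha>) \<le> r j * \<bar>xp j\<bar>" using r_pos[of j] by (intro mult_left_mono) auto
      then show "\<alpha> * w j \<le> r j * \<bar>xp j\<bar>" by (simp add: wbr algebra_simps)
    qed
    also have "\<dots> \<le> N" unfolding N_def using K(1)
      by (intro finite_sum_le_infsum sp) (auto simp: less_imp_le r_pos)
    finally show "real (card K) \<le> N / \<alpha>" using al by (simp add: field_simps)
  qed
  have W0: "W \<ge> 0" unfolding W_def using w0 by (simp add: sum_nonneg less_imp_le)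
  have S: "(\<Sum>\<^sub>\<infinity>j. ennreal (a j powr (-2) * (r j)^2 * (if a j powr (-2) * r j * \<alpha> < \<bar>xp j\<bar> then 1 else 0)))
      = ennreal W"
  proof -
    have "(\<Sum>\<^sub>\<infinity>j. ennreal (a j powr (-2) * (r j)^2 * (if a j powr (-2) * r j * \<alpha> < \<bar>xp j\<bar> then 1 else 0)))
        = (\<Sum>\<^sub>\<infinity>j\<in>J. ennreal (w j))"
      by (rule infsum_cong_neutral) (auto simp: J_def w_def)
    also have "\<dots> = (\<Sum>j\<in>J. ennreal (w j))" using fJ by simp
    also have "\<dots> = ennreal W" unfolding W_def by (rule sum_ennreal) (simp add: w0 less_imp_le)
    finally show ?thesis .
  qed
  have main: "\<alpha> * W powr (1/t) \<le> tg"
  proof (cases "W = 0")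
    case True then show ?thesis using tg0 by simp
  next
    case False
    then have Wp: "W > 0" using W0 by simp
    define x where "x j = (if j \<in> J then xp j - sgn (xp j) * \<alpha> * b j else xp j)" for j
    have xJ: "\<And>j. j \<in> J \<Longrightarrow> \<bar>x j\<bar> = \<bar>xp j\<bar> - \<alpha> * b j \<and> \<bar>xp j - x j\<bar> = \<alpha> * b j"
    proof -
      fix j assume j: "j \<in> J"
      then have lt: "b j * \<alpha> < \<bar>xp j\<bar>" using Jb by simp
      have p: "\<alpha> * b j > 0" using al b0[of j] by simp
      show "\<bar>x j\<bar> = \<bar>xp j\<bar> - \<alpha> * b j \<and> \<bar>xp j - x j\<bar> = \<alpha> * b j"
      proof (cases "xp j > 0")
        case True then show ?thesis using j lt p unfolding x_def by (simp add: mult.commute)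
      next
        case False
        then have "xp j < 0" using lt p by (cases "xp j = 0") (auto simp: mult.commute)
        then show ?thesis using j lt p unfolding x_def by (simp add: mult.commute)
      qed
    qed
    have xnJ: "\<And>j. j \<notin> J \<Longrightarrow> x j = xp j" unfolding x_def by simp
    have xle: "\<And>j. \<bar>x j\<bar> \<le> \<bar>xp j\<bar>"
    proof -
      fix j show "\<bar>x j\<bar> \<le> \<bar>xp j\<bar>"
        using xJ[of j] xnJ[of j] al b0[of j] by (cases "j \<in> J") auto
    qed
    have sxa: "(\<lambda>j. (a j * xp j)^2) summable_on UNIV" using D_sub[OF xp] by (simp add: wl2[OF a_pos])
    have xa: "wl a 2 x" unfolding wl2[OF a_pos]
    proof (rule summable_on_comparison_test[OF sxa])
      fix j show "(a j * x j)^2 \<le> (a j * xp j)^2"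
        using xle[of j] a_pos[of j] by (simp add: power_mult_distrib abs_le_square_iff[symmetric] mult_left_mono)
    qed simp
    have xD: "x \<in> D" using sc xp xa xle unfolding shrink_closed_def by blast
    have sx: "(\<lambda>j. r j * \<bar>x j\<bar>) summable_on UNIV"
    proof (rule summable_on_comparison_test[OF sp])
      fix j show "r j * \<bar>x j\<bar> \<le> r j * \<bar>xp j\<bar>" using xle[of j] r_pos[of j] by (simp add: mult_left_mono)
      show "0 \<le> r j * \<bar>x j\<bar>" using r_pos[of j] by simp
    qed
    have xl: "wl r 1 x" using sx by (simp add: wl1[OF r_pos])
    have n1: "wnorm r 1 (\<lambda>j. xp j - x j) = \<alpha> * W"
    proof -
      have "wnorm r 1 (\<lambda>j. xp j - x j) = (\<Sum>\<^sub>\<infinity>j. r j * \<bar>xp j - x j\<bar>)" by (rule wnorm1[OF r_pos])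
      also have "\<dots> = (\<Sum>\<^sub>\<infinity>j\<in>J. \<alpha> * w j)"
        by (rule infsum_cong_neutral) (auto simp: xnJ xJ wbr)
      also have "\<dots> = \<alpha> * W" using fJ unfolding W_def by (simp add: sum_distrib_left)
      finally show ?thesis .
    qed
    have n2: "wnorm r 1 xp - wnorm r 1 x = \<alpha> * W"
    proof -
      have "wnorm r 1 xp - wnorm r 1 x = (\<Sum>\<^sub>\<infinity>j. r j * \<bar>xp j\<bar> - r j * \<bar>x j\<bar>)"
        unfolding wnorm1[OF r_pos] by (rule infsum_diff_real[OF sp sx, symmetric])
      also have "\<dots> = (\<Sum>\<^sub>\<infinity>j\<in>J. \<alpha> * w j)"
        by (rule infsum_cong_neutral) (auto simp: xnJ xJ wbr algebra_simps)
      also have "\<dots> = \<alpha> * W" using fJ unfolding W_def by (simp add: sum_distrib_left)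
      finally show ?thesis .
    qed
    have n3: "wnorm a 2 (\<lambda>j. xp j - x j) = \<alpha> * sqrt W"
    proof -
      have "wnorm a 2 (\<lambda>j. xp j - x j) = sqrt (\<Sum>\<^sub>\<infinity>j. (a j * (xp j - x j))^2)" by (rule wnorm2[OF a_pos])
      also have "(\<Sum>\<^sub>\<infinity>j. (a j * (xp j - x j))^2) = (\<Sum>\<^sub>\<infinity>j\<in>J. \<alpha>^2 * w j)"
      proof (rule infsum_cong_neutral)
        fix j assume "j \<in> UNIV \<inter> J"
        then have "\<bar>xp j - x j\<bar> = \<alpha> * b j" using xJ by auto
        then have "(xp j - x j)^2 = (\<alpha> * b j)^2" by (metis power2_abs)
        then show "(a j * (xp j - x j))^2 = \<alpha>^2 * w j" using abw[of j] by (simp add: power_mult_distrib)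
      qed (auto simp: xnJ)
      also have "\<dots> = \<alpha>^2 * W" using fJ unfolding W_def by (simp add: sum_distrib_left)
      finally show ?thesis using al by (simp add: real_sqrt_mult)
    qed
    have e0: "e \<ge> 0" unfolding e_def using t by simp
    have "2 * \<alpha> * W \<le> C * norm (F xp - F x) powr e" using Vi[OF xD xl] n1 n2 by simp
    also have "\<dots> \<le> C * (L * \<alpha> * sqrt W) powr e"
      using lipu[OF xp xD] n3 C e0 by (intro mult_left_mono powr_mono2) (auto simp: mult.assoc)
    finally have "2 * \<alpha> * W \<le> C * (L * \<alpha> * sqrt W) powr ((2-2*t)/(2-t))" unfolding e_def .
    then show ?thesis unfolding tg_def using alg_part2[OF al Wp C L_pos t] by simp
  qed
  have "epow (ennreal W) (1/t) = ennreal (W powr (1/t))" unfolding epow_def using W0 by simp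
  then show "ennreal \<alpha> * epow (\<Sum>\<^sub>\<infinity>j. ennreal (a j powr (-2) * (r j)^2 * (if a j powr (-2) * r j * \<alpha> < \<bar>xp j\<bar> then 1 else 0))) (1/t)
        \<le> ennreal (L powr ((2 - 2*t) / t) * C powr ((2 - t) / t))"
    unfolding S using main al W0 by (simp add: ennreal_mult[symmetric] tg_def ennreal_leI)
qed



theorem theorem4p3:
  fixes a r :: "'i::countable \<Rightarrow> real"
    and F :: "('i \<Rightarrow> real) \<Rightarrow> 'y::banach"
    and D :: "('i \<Rightarrow> real) set"
    and L t \<rho> :: real and xp :: "'i \<Rightarrow> real"
  assumes a_pos: "\<And>j. a j > 0" and r_pos: "\<And>j. r j > 0"
    and ratio: "\<And>\<epsilon>. \<epsilon> > 0 \<Longrightarrow> finite {j. a j / r j > \<epsilon>}"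
    and D_sub: "\<And>x. x \<in> D \<Longrightarrow> wl a 2 x"
    and D_closed: "closed_wl2 a D"
    and D_l1: "\<exists>x\<in>D. wl r 1 x"
    and L_pos: "L > 0"
    and lip: "\<And>x1 x2. x1 \<in> D \<Longrightarrow> x2 \<in> D \<Longrightarrow>
        (1 / L) * wnorm a 2 (\<lambda>j. x1 j - x2 j) \<le> norm (F x1 - F x2) \<and>
        norm (F x1 - F x2) \<le> L * wnorm a 2 (\<lambda>j. x1 j - x2 j)"
    and t: "0 < t" "t < 1"
    and rho: "\<rho> > 0"
    and xp: "xp \<in> D"
  shows "(kt_norm a r t xp \<le> ennreal \<rho> \<longrightarrow>
            vsc r F D xp ((2 + 4 / (2 powr (1 - t) - 1)) * L powr ((2 - 2*t) / (2 - t)) * \<rho> powr (t / (2 - t)))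
                ((2 - 2*t) / (2 - t)))
       \<and> (shrink_closed a D \<longrightarrow>
            vsc r F D xp ((2 + 4 / (2 powr (1 - t) - 1)) * L powr ((2 - 2*t) / (2 - t)) * \<rho> powr (t / (2 - t)))
                ((2 - 2*t) / (2 - t)) \<longrightarrow>
            kt_norm a r t xp \<le> ennreal (L powr ((2 - 2*t) / t) *
              ((2 + 4 / (2 powr (1 - t) - 1)) * L powr ((2 - 2*t) / (2 - t)) * \<rho> powr (t / (2 - t))) powr ((2 - t) / t)))"
proof (intro conjI impI)
  have C0: "(2 + 4 / (2 powr (1 - t) - 1)) * L powr ((2 - 2*t) / (2 - t)) * \<rho> powr (t / (2 - t)) > 0"
  proof -
    have "2 powr (1 - t) > 1" using t by simp
    then have "2 + 4 / (2 powr (1 - t) - 1) > 0" by (simp add: add_pos_nonneg)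
    then show ?thesis using L_pos rho by simp
  qed
  have lipl: "\<And>x1 x2. x1 \<in> D \<Longrightarrow> x2 \<in> D \<Longrightarrow>
        (1 / L) * wnorm a 2 (\<lambda>j. x1 j - x2 j) \<le> norm (F x1 - F x2)"
  proof -
    fix x1 x2 assume "x1 \<in> D" "x2 \<in> D"
    from lip[OF this] show "(1 / L) * wnorm a 2 (\<lambda>j. x1 j - x2 j) \<le> norm (F x1 - F x2)" by (rule conjunct1)
  qed
  have lipu: "\<And>x1 x2. x1 \<in> D \<Longrightarrow> x2 \<in> D \<Longrightarrow>
        norm (F x1 - F x2) \<le> L * wnorm a 2 (\<lambda>j. x1 j - x2 j)"
  proof -
    fix x1 x2 assume "x1 \<in> D" "x2 \<in> D"
    from lip[OF this] show "norm (F x1 - F x2) \<le> L * wnorm a 2 (\<lambda>j. x1 j - x2 j)" by (rule conjunct2)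
  qed
  {
    assume kt: "kt_norm a r t xp \<le> ennreal \<rho>"
    show "vsc r F D xp ((2 + 4 / (2 powr (1 - t) - 1)) * L powr ((2 - 2*t) / (2 - t)) * \<rho> powr (t / (2 - t)))
                ((2 - 2*t) / (2 - t))"
      by (rule part1[OF a_pos r_pos ratio D_sub L_pos lipl t rho xp kt])
  }
  assume sc: "shrink_closed a D"
    and V: "vsc r F D xp ((2 + 4 / (2 powr (1 - t) - 1)) * L powr ((2 - 2*t) / (2 - t)) * \<rho> powr (t / (2 - t)))
                ((2 - 2*t) / (2 - t))"
  show "kt_norm a r t xp \<le> ennreal (L powr ((2 - 2*t) / t) *
              ((2 + 4 / (2 powr (1 - t) - 1)) * L powr ((2 - 2*t) / (2 - t)) * \<rho> powr (t / (2 - t))) powr ((2 - t) / t))"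
    by (rule part2[OF a_pos r_pos ratio D_sub L_pos lipu t xp C0 sc V])
qed

end
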